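(* For every integer $n\ge1$, the sets $\mathcal T_n$ and $\mathcal T'_n$ are SW- and NE-deterministic. However, the sets $\mathcal T_n$ and $\mathcal T'_n$ are neither NW- nor SE-deterministic.
   Context: A set of Wang tiles is SW-deterministic if no two distinct tiles have the same bottom and left labels; NE-, NW-, SE-deterministic are defined analogously with (top, right), (top, left), (bottom, right) labels respectively. $V_n=\{(v_0,v_1,v_2)\in\mathbb{Z}^3: 0\le v_0\le v_1\le 1,\ v_1\le v_2\le n+1\}$, elements written as words $v_0v_1v_2$. A Wang tile is $t=(a,b,c,d)$ with $\mathrm{RIGHT}(t)=a$, $\mathrm{TOP}(t)=b$, $\mathrm{LEFT}(t)=c$, $\mathrm{BOTTOM}(t)=d$; $\hat t=(b,a,d,c)$, $\hat S=\{\hat t:t\in S\}$. Define (as (right, top, left, bottom)): $W_n=\{(11(i+1),11(j+1),11i,11j):1\le i,j\le n\}$; $b_n^i=(00(i+1),111,00i,11n)$, $B'_n=\{b_n^i:0\le i\le n\}$, $B_n=\{b_n^i:0\le i\le n-1\}$; $G_n=\{(01(i+1),111,00i,11(n+1)):0\le i\le n\}$; $Y_n=\{(01(i+1),112,01i,11(n+1)):1\le i\le n\}$; $A_n=\{(00(i+1),112,01i,11n):1\le i\le n\}$; $j_n^{k,l,r,s}=((0,k,l),(0,r,s),(0,s,r+n),(0,l,k+n))$ for $(k,l),(r,s)\in\{(0,0),(0,1),(1,1)\}$; $J'_n$ is the set of these 9 tiles and $J_n=J'_n\setminus\{j_n^{0,0,1,1},j_n^{1,1,0,0}\}$. $\mathcal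 T'_n=W_n\cup B'_n\cup G_n\cup Y_n\cup A_n\cup\hat B'_n\cup\hat G_n\cup\hat Y_n\cup\hat A_n\cup J'_n$ and $\mathcal T_n=W_n\cup B_n\cup G_n\cup Y_n\cup\hat B_n\cup\hat G_n\cup\hat Y_n\cup J_n$. *)

theory Defs
  imports Main
begin

text \<open>Labels are words v0 v1 v2, encoded as integer triples. A Wang tile
(right, top, left, bottom) is a 4-tuple of labels.\<close>

type_synonym label = "int \<times> int \<times> int"
type_synonym tile = "label \<times> label \<times> label \<times> label"

definition RIGHT :: "tile \<Rightarrow> label" where "RIGHT t = (case t of (a,b,c,d) \<Rightarrow> a)"
definition TOP :: "tile \<Rightarrow> label" where "TOP t = (case t of (a,b,c,d) \<Rightarrow> b)"
definition LEFT :: "tile \<Rightarrow> label" where "LEFT t = (case t of (a,b,c,d) \<Rightarrow> c)"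
definition BOTTOM :: "tile \<Rightarrow> label" where "BOTTOM t = (case t of (a,b,c,d) \<Rightarrow> d)"

definition SW_det :: "tile set \<Rightarrow> bool" where
  "SW_det S \<longleftrightarrow> (\<forall>t\<in>S. \<forall>u\<in>S. t \<noteq> u \<longrightarrow> \<not> (BOTTOM t = BOTTOM u \<and> LEFT t = LEFT u))"
definition NE_det :: "tile set \<Rightarrow> bool" where
  "NE_det S \<longleftrightarrow> (\<forall>t\<in>S. \<forall>u\<in>S. t \<noteq> u \<longrightarrow> \<not> (TOP t = TOP u \<and> RIGHT t = RIGHT u))"
definition NW_det :: "tile set \<Rightarrow> bool" where
  "NW_det S \<longleftrightarrow> (\<forall>t\<in>S. \<forall>u\<in>S. t \<noteq> u \<longrightarrow> \<not> (TOP t = TOP u \<and> LEFT t = LEFT u))"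
definition SE_det :: "tile set \<Rightarrow> bool" where
  "SE_det S \<longleftrightarrow> (\<forall>t\<in>S. \<forall>u\<in>S. t \<noteq> u \<longrightarrow> \<not> (BOTTOM t = BOTTOM u \<and> RIGHT t = RIGHT u))"

definition hat :: "tile \<Rightarrow> tile" where
  "hat t = (case t of (a,b,c,d) \<Rightarrow> (b,a,d,c))"

definition W :: "nat \<Rightarrow> tile set" where
  "W n = {((1,1,i+1),(1,1,j+1),(1,1,i),(1,1,j)) | i j. 1 \<le> i \<and> i \<le> int n \<and> 1 \<le> j \<and> j \<le> int n}"

definition b :: "nat \<Rightarrow> int \<Rightarrow> tile" where
  "b n i = ((0,0,i+1),(1,1,1),(0,0,i),(1,1,int n))"

definition B' :: "nat \<Rightarrow> tile set" where
  "B' n = {b n i | i. 0 \<le> i \<and> i \<le> int n}"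
definition B :: "nat \<Rightarrow> tile set" where
  "B n = {b n i | i. 0 \<le> i \<and> i \<le> int n - 1}"

definition G :: "nat \<Rightarrow> tile set" where
  "G n = {((0,1,i+1),(1,1,1),(0,0,i),(1,1,int n+1)) | i. 0 \<le> i \<and> i \<le> int n}"
definition Y :: "nat \<Rightarrow> tile set" where
  "Y n = {((0,1,i+1),(1,1,2),(0,1,i),(1,1,int n+1)) | i. 1 \<le> i \<and> i \<le> int n}"
definition A :: "nat \<Rightarrow> tile set" where
  "A n = {((0,0,i+1),(1,1,2),(0,1,i),(1,1,int n)) | i. 1 \<le> i \<and> i \<le> int n}"

definition j :: "nat \<Rightarrow> int \<Rightarrow> int \<Rightarrow> int \<Rightarrow> int \<Rightarrow> tile" where
  "j n k l r s = ((0,k,l),(0,r,s),(0,s,r+int n),(0,l,k+int n))"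

definition JP :: "int \<times> int \<Rightarrow> bool" where
  "JP p \<longleftrightarrow> p \<in> {(0,0),(0,1),(1,1)}"

definition J' :: "nat \<Rightarrow> tile set" where
  "J' n = {j n k l r s | k l r s. JP (k,l) \<and> JP (r,s)}"
definition J :: "nat \<Rightarrow> tile set" where
  "J n = J' n - {j n 0 0 1 1, j n 1 1 0 0}"

definition T' :: "nat \<Rightarrow> tile set" where
  "T' n = W n \<union> B' n \<union> G n \<union> Y n \<union> A n \<union> hat ` B' n \<union> hat ` G n \<union> hat ` Y n
          \<union> hat ` A n \<union> J' n"
definition T :: "nat \<Rightarrow> tile set" where
  "T n = W n \<union> B n \<union> G n \<union> Y n \<union> hat ` B n \<union> hat ` G n \<union> hat ` Y n \<union> J n"

end

theory Submission
  imports Defs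
begin

definition decSW :: "nat \<Rightarrow> label \<Rightarrow> label \<Rightarrow> tile" where
  "decSW n d c = (case d of (d0,d1,d2) \<Rightarrow> case c of (c0,c1,c2) \<Rightarrow>
     if c0 = 1 \<and> d0 = 1 then ((1,1,c2+1),(1,1,d2+1),c,d)
     else if c0 = 0 \<and> d0 = 1 then ((0, if d2 = int n + 1 then 1 else 0, c2+1),(1,1,1+c1),c,d)
     else if c0 = 1 \<and> d0 = 0 then ((1,1,1+d1),(0, if c2 = int n + 1 then 1 else 0, d2+1),c,d)
     else ((0,d2 - int n,d1),(0,c2 - int n,c1),c,d))"

definition decNE :: "nat \<Rightarrow> label \<Rightarrow> label \<Rightarrow> tile" where
  "decNE n bb aa = (case bb of (b0,b1,b2) \<Rightarrow> case aa of (a0,a1,a2) \<Rightarrow>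
     if a0 = 1 \<and> b0 = 1 then (aa,bb,(1,1,a2-1),(1,1,b2-1))
     else if a0 = 0 \<and> b0 = 1 then (aa,bb,(0, if b2 = 2 then 1 else 0, a2-1),(1,1,int n + (if a1 = 1 then 1 else 0)))
     else if a0 = 1 \<and> b0 = 0 then (aa,bb,(1,1,int n + (if b1 = 1 then 1 else 0)),(0, if a2 = 2 then 1 else 0, b2-1))
     else (aa,bb,(0,b2,b1 + int n),(0,a2,a1 + int n)))"

lemmas U = decSW_def decNE_def BOTTOM_def LEFT_def TOP_def RIGHT_def hat_def b_def j_def JP_def

lemma sw0: "t \<in> W n \<Longrightarrow> t = decSW n (BOTTOM t) (LEFT t)" by (auto simp: W_def U)
lemma ne0: "t \<in> W n \<Longrightarrow> t = decNE n (TOP t) (RIGHT t)" by (auto simp: W_def U)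
lemma sw1: "t \<in> B' n \<Longrightarrow> t = decSW n (BOTTOM t) (LEFT t)" by (auto simp: B'_def U)
lemma ne1: "t \<in> B' n \<Longrightarrow> t = decNE n (TOP t) (RIGHT t)" by (auto simp: B'_def U)
lemma sw2: "t \<in> G n \<Longrightarrow> t = decSW n (BOTTOM t) (LEFT t)" by (auto simp: G_def U)
lemma ne2: "t \<in> G n \<Longrightarrow> t = decNE n (TOP t) (RIGHT t)" by (auto simp: G_def U)
lemma sw3: "t \<in> Y n \<Longrightarrow> t = decSW n (BOTTOM t) (LEFT t)" by (auto simp: Y_def U)
lemma ne3: "t \<in> Y n \<Longrightarrow> t = decNE n (TOP t) (RIGHT t)" by (auto simp: Y_def U)
lemma sw4: "t \<in> A n \<Longrightarrow> t = decSW n (BOTTOM t) (LEFT t)" by (auto simp: A_def U)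
lemma ne4: "t \<in> A n \<Longrightarrow> t = decNE n (TOP t) (RIGHT t)" by (auto simp: A_def U)
lemma sw5: "t \<in> hat ` B' n \<Longrightarrow> t = decSW n (BOTTOM t) (LEFT t)" by (auto simp: B'_def U)
lemma ne5: "t \<in> hat ` B' n \<Longrightarrow> t = decNE n (TOP t) (RIGHT t)" by (auto simp: B'_def U)
lemma sw6: "t \<in> hat ` G n \<Longrightarrow> t = decSW n (BOTTOM t) (LEFT t)" by (auto simp: G_def U)
lemma ne6: "t \<in> hat ` G n \<Longrightarrow> t = decNE n (TOP t) (RIGHT t)" by (auto simp: G_def U)
lemma sw7: "t \<in> hat ` Y n \<Longrightarrow> t = decSW n (BOTTOM t) (LEFT t)" by (auto simp: Y_def U)
lemma ne7: "t \<in> hat ` Y n \<Longrightarrow> t = decNE n (TOP t) (RIGHT t)" by (auto simp: Y_def U)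
lemma sw8: "t \<in> hat ` A n \<Longrightarrow> t = decSW n (BOTTOM t) (LEFT t)" by (auto simp: A_def U)
lemma ne8: "t \<in> hat ` A n \<Longrightarrow> t = decNE n (TOP t) (RIGHT t)" by (auto simp: A_def U)
lemma sw9: "t \<in> J' n \<Longrightarrow> t = decSW n (BOTTOM t) (LEFT t)" by (auto simp: J'_def U)
lemma ne9: "t \<in> J' n \<Longrightarrow> t = decNE n (TOP t) (RIGHT t)" by (auto simp: J'_def U)

lemma famSW:
  assumes "t \<in> T' n"
  shows "t = decSW n (BOTTOM t) (LEFT t)"
  using assms unfolding T'_def
  by (elim UnE) (erule sw0 sw1 sw2 sw3 sw4 sw5 sw6 sw7 sw8 sw9)+

lemma famNE:
  assumes "t \<in> T' n"
  shows "t = decNE n (TOP t) (RIGHT t)"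
  using assms unfolding T'_def
  by (elim UnE) (erule ne0 ne1 ne2 ne3 ne4 ne5 ne6 ne7 ne8 ne9)+

lemma sub: "T n \<subseteq> T' n"
proof -
  have "B n \<subseteq> B' n" unfolding B_def B'_def by auto
  moreover have "J n \<subseteq> J' n" unfolding J_def by auto
  ultimately show ?thesis unfolding T_def T'_def by blast
qed

lemma SW': "SW_det (T' n)"
  unfolding SW_det_def
proof (intro ballI impI notI)
  fix t u assume "t \<in> T' n" "u \<in> T' n" "t \<noteq> u" "BOTTOM t = BOTTOM u \<and> LEFT t = LEFT u"
  then show False using famSW[of t n] famSW[of u n] by simp
qed

lemma NE': "NE_det (T' n)"
  unfolding NE_det_def
proof (intro ballI impI notI)
  fix t u assume "t \<in> T' n" "u \<in> T' n" "t \<noteq> u" "TOP t = TOP u \<and> RIGHT t = RIGHT u"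
  then show False using famNE[of t n] famNE[of u n] by simp
qed

lemma SWsub: "SW_det S' \<Longrightarrow> S \<subseteq> S' \<Longrightarrow> SW_det S"
  unfolding SW_det_def by blast
lemma NEsub: "NE_det S' \<Longrightarrow> S \<subseteq> S' \<Longrightarrow> NE_det S"
  unfolding NE_det_def by blast

lemma j_in: "JP (k,l) \<Longrightarrow> JP (r,s) \<Longrightarrow> (k,l,r,s) \<notin> {(0,0,1,1),(1,1,0,0)} \<Longrightarrow> j n k l r s \<in> T n"
proof -
  assume a: "JP (k,l)" "JP (r,s)" "(k,l,r,s) \<notin> {(0,0,1,1),(1,1,0,0)}"
  have "j n k l r s \<in> J' n" unfolding J'_def using a(1,2) by blast
  moreover have "j n k l r s \<noteq> j n 0 0 1 1" "j n k l r s \<noteq> j n 1 1 0 0"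
    using a(3) by (auto simp: j_def)
  ultimately show ?thesis unfolding T_def J_def by blast
qed

lemma notNW: "\<not> NW_det (T n)"
proof -
  have 1: "j n 0 0 0 0 \<in> T n" by (rule j_in) (auto simp: JP_def)
  have 2: "j n 0 1 0 0 \<in> T n" by (rule j_in) (auto simp: JP_def)
  have "j n 0 0 0 0 \<noteq> j n 0 1 0 0" "TOP (j n 0 0 0 0) = TOP (j n 0 1 0 0)"
    "LEFT (j n 0 0 0 0) = LEFT (j n 0 1 0 0)" by (auto simp: U)
  then show ?thesis unfolding NW_det_def using 1 2 by blast
qed

lemma notSE: "\<not> SE_det (T n)"
proof -
  have 1: "j n 0 0 0 0 \<in> T n" by (rule j_in) (auto simp: JP_def)
  have 2: "j n 0 0 0 1 \<in> T n" by (rule j_in) (auto simp: JP_def)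
  have "j n 0 0 0 0 \<noteq> j n 0 0 0 1" "BOTTOM (j n 0 0 0 0) = BOTTOM (j n 0 0 0 1)"
    "RIGHT (j n 0 0 0 0) = RIGHT (j n 0 0 0 1)" by (auto simp: U)
  then show ?thesis unfolding SE_det_def using 1 2 by blast
qed

lemma NWsub: "\<not> NW_det S \<Longrightarrow> S \<subseteq> S' \<Longrightarrow> \<not> NW_det S'"
  unfolding NW_det_def by blast
lemma SEsub: "\<not> SE_det S \<Longrightarrow> S \<subseteq> S' \<Longrightarrow> \<not> SE_det S'"
  unfolding SE_det_def by blast

theorem lemma4p2:
  fixes n :: nat
  assumes "n \<ge> 1"
  shows "SW_det (T n) \<and> NE_det (T n) \<and> SW_det (T' n) \<and> NE_det (T' n)
       \<and> \<not> NW_det (T n) \<and> \<not> SE_det (T n) \<and> \<not> NW_det (T' n) \<and> \<not> SE_det (T' n)"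
proof -
  have s: "T n \<subseteq> T' n" by (rule sub)
  show ?thesis
    using SW'[of n] NE'[of n] SWsub[OF SW' s] NEsub[OF NE' s] notNW[of n] notSE[of n]
      NWsub[OF notNW s] SEsub[OF notSE s] by simp
qed

end
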